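(* For every $m\ge 1$ and every $\alpha\in\mathbb{S}_m$, the element $\alpha-\sigma_m^{-1}\alpha\sigma_m$ of the group algebra $\mathbb{C}[\mathbb{S}_m]$ lies in the linear span of all generalized Vassiliev elements in $\mathbb{C}[\mathbb{S}_m]$. Consequently any two permutations conjugate by a power of $\sigma_m$ (i.e. any two hyper arc diagrams representing the same hyper chord diagram) are equal modulo generalized Vassiliev relations.
   Context: Permutations $\alpha\in\mathbb{S}_m$ act on $[m]=\{1,\dots,m\}$; $\sigma_m=(1,2,\dots,m)$ is the standard long cycle. A permutation $\alpha\in\mathbb{S}_m$ is called a hyper arc diagram; its cycles are called hyper edges and the elements of a cycle its legs. A hyper chord diagram is the orbit of $\alpha$ under conjugation $\alpha\mapsto\sigma_m^{-k}\alpha\sigma_m^{k}$ (cyclic shift). Generalized Vassiliev elements: let $m\ge2$, $\gamma\in\mathbb{S}_{m-1}$, and $q\in[m-1]\cup\{*\}$. For $t\in\{0,1,\dots,m-1\}$ let $\alpha_t=\alpha_t(\gamma,q)\in\mathbb{S}_m$ be obtained as follows: place the points $1,\dots,m-1$ on a line in increasing order, insert a new point $x$ (the free leg) in the gap between $t$ and $t+1$ (before $1$ if $t=0$, after $m-1$ if $t=m-1$), and relabel the $m$ points by $1,\dots,m$ in order; the permutation acts as $\gamma$ on the old points, except that if $q\neq *$ then $q\mapsto x\mapsto\gamma(q)$, and if $q=*$ then $x$ is a fixed point. For a cycle $v$ of $\gamma$ put $E(\gamma,q,v)=\sum_{j\in v}\big(\alpha_{j-1}-\alpha_j\big)\in\mathbb{C}[\mathbb{S}_m]$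 (the free leg placed immediately before a leg $j$ of $v$ with sign $+$, immediately after it with sign $-$). $E(\gamma,q,v)$ is a one-hyper-arc element if $q\ne *$ and $q\in v$, and a two-hyper-arc element otherwise. Both kinds are called generalized Vassiliev elements; a function on permutations satisfies the generalized Vassiliev relations if its linear extension vanishes on all of them. *)

theory Defs
  imports "HOL-Combinatorics.Permutations" Complex_Main
begin

text \<open>Elements of the group algebra C[S_m] are functions from permutations to complex numbers
(coefficient of each permutation); only permutations of {1..m} are relevant.\<close>

definition perms :: "nat \<Rightarrow> (nat \<Rightarrow> nat) set" where
  "perms m = {p. p permutes {1..m}}"

definition delta :: "(nat \<Rightarrow> nat) \<Rightarrow> ((nat \<Rightarrow> nat) \<Rightarrow> complex)" where
  "delta a = (\<lambda>p. if p = a then 1 else 0)"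

definition long_cycle :: "nat \<Rightarrow> nat \<Rightarrow> nat" where
  "long_cycle m i = (if 1 \<le> i \<and> i < m then i + 1 else if i = m then 1 else i)"

definition lin_span :: "((nat \<Rightarrow> nat) \<Rightarrow> complex) set \<Rightarrow> ((nat \<Rightarrow> nat) \<Rightarrow> complex) set" where
  "lin_span S = {x. \<exists>F c. finite F \<and> F \<subseteq> S \<and> x = (\<lambda>p. \<Sum>v\<in>F. c v * v p)}"

text \<open>Relabelling of an old point i when the free leg is inserted between t and t+1;
the free leg itself gets label t+1.\<close>
definition ins_pos :: "nat \<Rightarrow> nat \<Rightarrow> nat" where
  "ins_pos t i = (if i \<le> t then i else i + 1)"

text \<open>alpha_t(gamma, q) in S_m, for gamma in S_(m-1); q = None encodes q = *.\<close>
definition alpha_t :: "nat \<Rightarrow> (nat \<Rightarrow> nat) \<Rightarrow> nat option \<Rightarrow> nat \<Rightarrow> nat \<Rightarrow> nat" where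
  "alpha_t m \<gamma> q t j =
     (if j < 1 \<or> m < j then j
      else if j = t + 1 then
        (case q of None \<Rightarrow> t + 1 | Some q' \<Rightarrow> ins_pos t (\<gamma> q'))
      else
        (let i = (if j \<le> t then j else j - 1) in
          if q = Some i then t + 1 else ins_pos t (\<gamma> i)))"

definition cycles_of :: "nat \<Rightarrow> (nat \<Rightarrow> nat) \<Rightarrow> nat set set" where
  "cycles_of n \<gamma> = {{(\<gamma> ^^ k) j | k. True} | j. j \<in> {1..n}}"

definition vass_elem :: "nat \<Rightarrow> (nat \<Rightarrow> nat) \<Rightarrow> nat option \<Rightarrow> nat set \<Rightarrow> ((nat \<Rightarrow> nat) \<Rightarrow> complex)" where
  "vass_elem m \<gamma> q v =
     (\<lambda>p. \<Sum>j\<in>v. delta (alpha_t m \<gamma> q (j - 1)) p - delta (alpha_t m \<gamma> q j) p)"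

definition gen_vassiliev :: "nat \<Rightarrow> ((nat \<Rightarrow> nat) \<Rightarrow> complex) set" where
  "gen_vassiliev m = {vass_elem m \<gamma> q v | \<gamma> q v.
      2 \<le> m \<and> \<gamma> permutes {1..m-1} \<and> (q = None \<or> (\<exists>q'. q = Some q' \<and> q' \<in> {1..m-1}))
      \<and> v \<in> cycles_of (m - 1) \<gamma>}"

definition lin_ext :: "nat \<Rightarrow> ((nat \<Rightarrow> nat) \<Rightarrow> complex) \<Rightarrow> ((nat \<Rightarrow> nat) \<Rightarrow> complex) \<Rightarrow> complex" where
  "lin_ext m f x = (\<Sum>p\<in>perms m. x p * f p)"

end

theory Submission
  imports Defs "HOL-Combinatorics.Orbits"
begin


lemma lin_span_zero: "(\<lambda>p. 0) \<in> lin_span S"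
  unfolding lin_span_def by (rule CollectI, rule exI[of _ "{}"]) auto

lemma lin_span_single: "e \<in> S \<Longrightarrow> e \<in> lin_span S"
  unfolding lin_span_def by (rule CollectI, rule exI[of _ "{e}"], rule exI[of _ "\<lambda>_. 1"]) auto

lemma lin_span_add:
  assumes "x \<in> lin_span S" "y \<in> lin_span S"
  shows "(\<lambda>p. x p + y p) \<in> lin_span S"
proof -
  obtain F1 c1 where 1: "finite F1" "F1 \<subseteq> S" "x = (\<lambda>p. \<Sum>v\<in>F1. c1 v * v p)"
    using assms(1) unfolding lin_span_def by blast
  obtain F2 c2 where 2: "finite F2" "F2 \<subseteq> S" "y = (\<lambda>p. \<Sum>v\<in>F2. c2 v * v p)"
    using assms(2) unfolding lin_span_def by blast
  define c where "c v = (if v \<in> F1 then c1 v else 0) + (if v \<in> F2 then c2 v else 0)" for v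
  have "(\<lambda>p. x p + y p) = (\<lambda>p. \<Sum>v\<in>F1 \<union> F2. c v * v p)"
  proof
    fix p
    have "(\<Sum>v\<in>F1 \<union> F2. c v * v p) = (\<Sum>v\<in>F1 \<union> F2. (if v \<in> F1 then c1 v * v p else 0))
       + (\<Sum>v\<in>F1 \<union> F2. (if v \<in> F2 then c2 v * v p else 0))"
      unfolding c_def sum.distrib[symmetric] by (rule sum.cong) (auto simp: distrib_right)
    also have "\<dots> = x p + y p"
      using 1 2 by (simp add: sum.If_cases Int_absorb1 Int_absorb2 Int_commute)
    finally show "x p + y p = (\<Sum>v\<in>F1 \<union> F2. c v * v p)" by simp
  qed
  then show ?thesis unfolding lin_span_def using 1 2 by blast
qed

lemma lin_span_sum:
  assumes "finite A" "\<forall>a\<in>A. h a \<in> S"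
  shows "(\<lambda>p. \<Sum>a\<in>A. h a p) \<in> lin_span S"
  using assms
proof (induction A rule: finite_induct)
  case empty then show ?case using lin_span_zero by simp
next
  case (insert a A)
  then show ?case using lin_span_add[OF lin_span_single[of "h a" S], of "\<lambda>p. \<Sum>a\<in>A. h a p"] by simp
qed

lemma telescope: "(\<Sum>j\<in>{1..n::nat}. (f (j - 1) - f j :: complex)) = f 0 - f n"
  by (induction n) (auto simp: atLeastAtMostSuc_conv)

lemma cycles_sum:
  assumes "\<gamma> permutes {1..n}"
  shows "(\<Sum>v\<in>cycles_of n \<gamma>. \<Sum>j\<in>v. g j) = (\<Sum>j\<in>{1..n}. (g j :: complex))"
proof -
  have perm: "permutation \<gamma>" using assms permutation_permutes by blast
  have C: "cycles_of n \<gamma> = orbit \<gamma> ` {1..n}"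
    unfolding cycles_of_def using orbit_altdef_permutation[OF perm] by auto
  have fin: "\<forall>A\<in>cycles_of n \<gamma>. finite A"
    unfolding C using permutes_orbit_subset[OF assms] finite_subset by blast
  have disj: "\<forall>A\<in>cycles_of n \<gamma>. \<forall>B\<in>cycles_of n \<gamma>. A \<noteq> B \<longrightarrow> A \<inter> B = {}"
  proof (intro ballI impI)
    fix A B assume "A \<in> cycles_of n \<gamma>" "B \<in> cycles_of n \<gamma>" "A \<noteq> B"
    then obtain a b where ab: "A = orbit \<gamma> a" "B = orbit \<gamma> b" "orbit \<gamma> a \<noteq> orbit \<gamma> b"
      unfolding C by blast
    show "A \<inter> B = {}"
    proof (rule ccontr)
      assume "A \<inter> B \<noteq> {}"
      then obtain y where "y \<in> orbit \<gamma> a" "y \<in> orbit \<gamma> b" using ab by blast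
      then have "orbit \<gamma> y = orbit \<gamma> a" "orbit \<gamma> y = orbit \<gamma> b"
        using orbit_cyclic_eq3[OF cyclic_on_orbit'[OF perm]] by blast+
      then show False using ab by simp
    qed
  qed
  have U: "\<Union>(cycles_of n \<gamma>) = {1..n}"
    unfolding C using permutes_orbit_subset[OF assms] permutation_self_in_orbit[OF perm] by blast
  show ?thesis
    using sum.Union_disjoint[OF fin disj, of g] U by simp
qed



definition lc_inv :: "nat \<Rightarrow> nat \<Rightarrow> nat" where
  "lc_inv m i = (if 2 \<le> i \<and> i \<le> m then i - 1 else if i = 1 then m else i)"

lemma lc_comp1: "1 \<le> m \<Longrightarrow> lc_inv m \<circ> long_cycle m = id"
  by (auto simp: fun_eq_iff lc_inv_def long_cycle_def)
lemma lc_comp2: "1 \<le> m \<Longrightarrow> long_cycle m \<circ> lc_inv m = id"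
  by (auto simp: fun_eq_iff lc_inv_def long_cycle_def)

lemma lc_inv: "1 \<le> m \<Longrightarrow> inv (long_cycle m) = lc_inv m"
  by (rule inv_unique_comp[OF lc_comp2 lc_comp1])

lemma lc_permutes: assumes m: "1 \<le> m" shows "long_cycle m permutes {1..m}"
  unfolding permutes_def
proof (intro conjI allI impI)
  fix x assume "x \<notin> {1..m}" then show "long_cycle m x = x" using m by (auto simp: long_cycle_def)
next
  fix y
  show "\<exists>!x. long_cycle m x = y"
  proof
    show "long_cycle m (lc_inv m y) = y" using lc_comp2[OF m] by (simp add: fun_eq_iff)
    fix x assume "long_cycle m x = y"
    then show "x = lc_inv m y" using lc_comp1[OF m] by (auto simp: fun_eq_iff)
  qed
qed

lemma main_step:
  assumes m: "2 \<le> m" and a: "\<alpha> permutes {1..m}"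
  shows "(\<lambda>p. delta \<alpha> p - delta (inv (long_cycle m) \<circ> \<alpha> \<circ> long_cycle m) p)
           \<in> lin_span (gen_vassiliev m)"
proof -
  define n where "n = m - 1"
  define r where "r = inv \<alpha> 1"
  have ar: "\<alpha> j = 1 \<longleftrightarrow> j = r" for j unfolding r_def using permutes_inv_eq[OF a, of 1 j] by auto
  have ainj: "\<And>x y. \<alpha> x = \<alpha> y \<longleftrightarrow> x = y" using permutes_inj[OF a] by (simp add: inj_eq)
  have ain: "\<And>x. \<alpha> x \<in> {1..m} \<longleftrightarrow> x \<in> {1..m}" using permutes_in_image[OF a] by blast
  have aout: "\<And>x. x \<notin> {1..m} \<Longrightarrow> \<alpha> x = x" using a unfolding permutes_def by blast
  have r1: "r \<in> {1..m}" unfolding r_def using permutes_in_image[OF permutes_inv[OF a], of 1] m by auto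
  define q where "q = (if \<alpha> 1 = 1 then None else Some (r - 1))"
  define \<gamma> where "\<gamma> i = (if 1 \<le> i \<and> i \<le> n then (if \<alpha> (i+1) = 1 then \<alpha> 1 - 1 else \<alpha> (i+1) - 1) else i)" for i
  have gin: "\<gamma> ` {1..n} \<subseteq> {1..n}"
  proof
    fix y assume "y \<in> \<gamma> ` {1..n}"
    then obtain i where i: "i \<in> {1..n}" "y = \<gamma> i" by blast
    have "i + 1 \<in> {1..m}" "1 \<in> {1..m}" using i m n_def by auto
    then have "\<alpha> (i+1) \<in> {1..m}" "\<alpha> 1 \<in> {1..m}" using ain by blast+
    moreover have "\<alpha> (i+1) = 1 \<Longrightarrow> \<alpha> 1 \<noteq> 1" using ar[of "i+1"] ar[of 1] i by auto
    ultimately show "y \<in> {1..n}" using i n_def by (auto simp: \<gamma>_def)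
  qed
  have ginj: "inj_on \<gamma> {1..n}"
  proof
    fix i j assume i: "i \<in> {1..n}" and j: "j \<in> {1..n}" and e: "\<gamma> i = \<gamma> j"
    have "i + 1 \<in> {1..m}" "j + 1 \<in> {1..m}" "1 \<in> {1..m}" using i j m n_def by auto
    then have b: "\<alpha> (i+1) \<in> {1..m}" "\<alpha> (j+1) \<in> {1..m}" "\<alpha> 1 \<in> {1..m}" using ain by blast+
    have c: "\<alpha> (i+1) = 1 \<Longrightarrow> \<alpha> 1 \<noteq> 1" "\<alpha> (j+1) = 1 \<Longrightarrow> \<alpha> 1 \<noteq> 1" using ar[of "i+1"] ar[of "j+1"] ar[of 1] i j by auto
    have e': "(if \<alpha> (i+1) = 1 then \<alpha> 1 else \<alpha> (i+1)) = (if \<alpha> (j+1) = 1 then \<alpha> 1 else \<alpha> (j+1))"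
      using e i j b c by (auto simp: \<gamma>_def split: if_splits)
    then show "i = j" using ainj ar i j by (auto split: if_splits)
  qed
  have gperm: "\<gamma> permutes {1..n}"
  proof -
    have "bij_betw \<gamma> {1..n} {1..n}" unfolding bij_betw_def
      using ginj endo_inj_surj[OF finite_atLeastAtMost gin ginj] by blast
    then show ?thesis by (rule bij_imp_permutes) (auto simp: \<gamma>_def)
  qed
  have qok: "q = None \<or> (\<exists>q'. q = Some q' \<and> q' \<in> {1..m-1})"
  proof (cases "\<alpha> 1 = 1")
    case False
    then have "r \<noteq> 1" using ar by blast
    then show ?thesis using r1 False by (auto simp: q_def)
  qed (simp add: q_def)
  have a1m: "\<alpha> 1 \<in> {1..m}" using ain m by auto
  have A0: "alpha_t m \<gamma> q 0 = \<alpha>"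
  proof
    fix j
    consider "j < 1 \<or> m < j" | "j = 1" | "2 \<le> j \<and> j \<le> m" by linarith
    then show "alpha_t m \<gamma> q 0 j = \<alpha> j"
    proof cases
      case 1 then show ?thesis using aout by (auto simp: alpha_t_def)
    next
      case 2
      show ?thesis
      proof (cases "\<alpha> 1 = 1")
        case True then show ?thesis using 2 m by (simp add: alpha_t_def q_def)
      next
        case False
        then have "r \<noteq> 1" using ar by auto
        then have rr: "r - 1 \<in> {1..n}" "r - 1 + 1 = r" using r1 n_def by auto
        have "\<gamma> (r-1) = \<alpha> 1 - 1" using rr ar by (simp add: \<gamma>_def)
        moreover have "\<alpha> 1 \<ge> 2" using False a1m by auto
        ultimately show ?thesis using 2 m False by (simp add: alpha_t_def q_def ins_pos_def)
      qed
    next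
      case 3
      have j1: "j - 1 \<in> {1..n}" "j - 1 + 1 = j" using 3 n_def by auto
      have ajm: "\<alpha> j \<in> {1..m}" using ain 3 by auto
      show ?thesis
      proof (cases "\<alpha> j = 1")
        case True
        then have "j = r" using ar by auto
        then have "\<alpha> 1 \<noteq> 1" using ar 3 by auto
        then have "q = Some (j - 1)" using \<open>j = r\<close> q_def by simp
        then show ?thesis using 3 True by (simp add: alpha_t_def)
      next
        case False
        then have "j \<noteq> r" using ar by auto
        then have "q \<noteq> Some (j-1)" using r1 3 by (auto simp: q_def)
        moreover have "\<gamma> (j-1) = \<alpha> j - 1" using j1 False by (simp add: \<gamma>_def)
        ultimately show ?thesis using 3 False ajm by (auto simp: alpha_t_def ins_pos_def Let_def)
      qed
    qed
  qed
  have An: "alpha_t m \<gamma> q n = inv (long_cycle m) \<circ> \<alpha> \<circ> long_cycle m"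
  proof
    fix j
    have m1: "1 \<le> m" using m by simp
    have R: "(inv (long_cycle m) \<circ> \<alpha> \<circ> long_cycle m) j = lc_inv m (\<alpha> (long_cycle m j))"
      by (simp add: lc_inv[OF m1])
    consider "j < 1 \<or> m < j" | "j = m" | "1 \<le> j \<and> j < m" by linarith
    then show "alpha_t m \<gamma> q n j = (inv (long_cycle m) \<circ> \<alpha> \<circ> long_cycle m) j"
    proof cases
      case 1
      then have "long_cycle m j = j" using m by (auto simp: long_cycle_def)
      moreover have "\<alpha> j = j" using aout 1 by auto
      ultimately show ?thesis unfolding R using 1 m by (auto simp: alpha_t_def lc_inv_def)
    next
      case 2
      have s: "long_cycle m j = 1" using 2 m by (simp add: long_cycle_def)
      show ?thesis
      proof (cases "\<alpha> 1 = 1")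
        case True then show ?thesis unfolding R s using 2 m n_def by (simp add: alpha_t_def q_def lc_inv_def)
      next
        case False
        then have "r \<noteq> 1" using ar by auto
        then have rr: "r - 1 \<in> {1..n}" "r - 1 + 1 = r" using r1 n_def by auto
        have "\<gamma> (r-1) = \<alpha> 1 - 1" using rr ar by (simp add: \<gamma>_def)
        moreover have "\<alpha> 1 \<ge> 2" using False a1m by auto
        ultimately show ?thesis unfolding R s using 2 m False a1m n_def
          by (simp add: alpha_t_def q_def ins_pos_def lc_inv_def)
      qed
    next
      case 3
      have s: "long_cycle m j = j + 1" using 3 by (simp add: long_cycle_def)
      have ajm: "\<alpha> (j+1) \<in> {1..m}" using ain 3 by auto
      have jn: "j \<in> {1..n}" using 3 n_def by auto
      show ?thesis
      proof (cases "\<alpha> (j+1) = 1")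
        case True
        then have "j + 1 = r" using ar by auto
        then have "\<alpha> 1 \<noteq> 1" using ar 3 by auto
        then have "q = Some j" using \<open>j + 1 = r\<close> q_def by simp
        then show ?thesis unfolding R s using 3 True n_def by (auto simp: alpha_t_def lc_inv_def Let_def)
      next
        case False
        then have "j + 1 \<noteq> r" using ar by auto
        then have "q \<noteq> Some j" using r1 3 by (auto simp: q_def)
        moreover have "\<gamma> j = \<alpha> (j+1) - 1" using jn False by (simp add: \<gamma>_def)
        ultimately show ?thesis unfolding R s using 3 False ajm n_def
          by (auto simp: alpha_t_def ins_pos_def Let_def lc_inv_def)
      qed
    qed
  qed
  define g where "g j p = delta (alpha_t m \<gamma> q (j - 1)) p - delta (alpha_t m \<gamma> q j) p" for j p
  have "(\<lambda>p. delta \<alpha> p - delta (inv (long_cycle m) \<circ> \<alpha> \<circ> long_cycle m) p)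
      = (\<lambda>p. \<Sum>v\<in>cycles_of n \<gamma>. vass_elem m \<gamma> q v p)"
  proof
    fix p
    have "(\<Sum>v\<in>cycles_of n \<gamma>. vass_elem m \<gamma> q v p) = (\<Sum>v\<in>cycles_of n \<gamma>. \<Sum>j\<in>v. g j p)"
      unfolding vass_elem_def g_def by simp
    also have "\<dots> = (\<Sum>j\<in>{1..n}. g j p)" by (rule cycles_sum[OF gperm])
    also have "\<dots> = delta (alpha_t m \<gamma> q 0) p - delta (alpha_t m \<gamma> q n) p"
      unfolding g_def by (rule telescope[where f = "\<lambda>j. delta (alpha_t m \<gamma> q j) p"])
    finally show "delta \<alpha> p - delta (inv (long_cycle m) \<circ> \<alpha> \<circ> long_cycle m) p = (\<Sum>v\<in>cycles_of n \<gamma>. vass_elem m \<gamma> q v p)"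
      using A0 An by simp
  qed
  also have "\<dots> \<in> lin_span (gen_vassiliev m)"
  proof (rule lin_span_sum)
    have "cycles_of n \<gamma> = (\<lambda>j. {(\<gamma> ^^ k) j | k. True}) ` {1..n}" unfolding cycles_of_def by blast
    then show "finite (cycles_of n \<gamma>)" by simp
    show "\<forall>v\<in>cycles_of n \<gamma>. vass_elem m \<gamma> q v \<in> gen_vassiliev m"
    proof
      fix v assume "v \<in> cycles_of n \<gamma>"
      then show "vass_elem m \<gamma> q v \<in> gen_vassiliev m"
        unfolding gen_vassiliev_def using m gperm qok n_def by blast
    qed
  qed
  finally show ?thesis .
qed



lemma part1:
  assumes "1 \<le> m" and a: "\<alpha> permutes {1..m}"
  shows "(\<lambda>p. delta \<alpha> p - delta (inv (long_cycle m) \<circ> \<alpha> \<circ> long_cycle m) p)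
           \<in> lin_span (gen_vassiliev m)"
proof (cases "m = 1")
  case True
  have "long_cycle m = id" using True by (auto simp: fun_eq_iff long_cycle_def)
  then show ?thesis using lin_span_zero by simp
next
  case False
  then show ?thesis using main_step[OF _ a] assms(1) by simp
qed

lemma lin_ext_span:
  assumes "\<forall>e\<in>S. lin_ext m f e = 0" "x \<in> lin_span S"
  shows "lin_ext m f x = 0"
proof -
  obtain F c where F: "finite F" "F \<subseteq> S" "x = (\<lambda>p. \<Sum>v\<in>F. c v * v p)"
    using assms(2) unfolding lin_span_def by blast
  have "lin_ext m f x = (\<Sum>p\<in>perms m. \<Sum>v\<in>F. c v * (v p * f p))"
    unfolding lin_ext_def F(3) by (simp add: sum_distrib_right mult.assoc)
  also have "\<dots> = (\<Sum>v\<in>F. c v * lin_ext m f v)"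
    unfolding lin_ext_def by (subst sum.swap) (simp add: sum_distrib_left)
  also have "\<dots> = 0" using assms(1) F(2) by (auto intro!: sum.neutral)
  finally show ?thesis .
qed

lemma lin_ext_delta:
  assumes "a \<in> perms m" "b \<in> perms m"
  shows "lin_ext m f (\<lambda>p. delta a p - delta b p) = f a - f b"
proof -
  have fin: "finite (perms m)" unfolding perms_def by (rule finite_permutations) simp
  have e: "delta x p * f p = (if p = x then f x else 0)" for x p by (simp add: delta_def)
  have s1: "(\<Sum>p\<in>perms m. delta x p * f p) = f x" if "x \<in> perms m" for x
    unfolding e using fin that by (simp add: sum.delta')
  have "lin_ext m f (\<lambda>p. delta a p - delta b p)
      = (\<Sum>p\<in>perms m. delta a p * f p) - (\<Sum>p\<in>perms m. delta b p * f p)"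
    unfolding lin_ext_def by (simp add: left_diff_distrib sum_subtractf)
  also have "\<dots> = f a - f b" using s1 assms by simp
  finally show ?thesis .
qed

theorem lemma1:
  fixes m :: nat and \<alpha> :: "nat \<Rightarrow> nat"
  assumes "1 \<le> m" and "\<alpha> permutes {1..m}"
  shows "(\<lambda>p. delta \<alpha> p - delta (inv (long_cycle m) \<circ> \<alpha> \<circ> long_cycle m) p)
           \<in> lin_span (gen_vassiliev m)
    \<and> (\<forall>f :: (nat \<Rightarrow> nat) \<Rightarrow> complex.
         (\<forall>e\<in>gen_vassiliev m. lin_ext m f e = 0) \<longrightarrow>
         (\<forall>k::nat. f ((inv (long_cycle m) ^^ k) \<circ> \<alpha> \<circ> (long_cycle m ^^ k)) = f \<alpha>))"
proof (intro conjI allI impI)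
  show "(\<lambda>p. delta \<alpha> p - delta (inv (long_cycle m) \<circ> \<alpha> \<circ> long_cycle m) p)
           \<in> lin_span (gen_vassiliev m)" by (rule part1[OF assms])
next
  fix f :: "(nat \<Rightarrow> nat) \<Rightarrow> complex" and k :: nat
  assume f: "\<forall>e\<in>gen_vassiliev m. lin_ext m f e = 0"
  let ?s = "long_cycle m"
  have sp: "?s permutes {1..m}" by (rule lc_permutes[OF assms(1)])
  have sip: "inv ?s permutes {1..m}" by (rule permutes_inv[OF sp])
  define b where "b k = (inv ?s ^^ k) \<circ> \<alpha> \<circ> (?s ^^ k)" for k
  have bS: "b (Suc k) = inv ?s \<circ> b k \<circ> ?s" for k
  proof -
    have h1: "inv ?s ^^ Suc k = inv ?s \<circ> (inv ?s ^^ k)" by (rule funpow.simps(2))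
    have h2: "?s ^^ Suc k = (?s ^^ k) \<circ> ?s" by (rule funpow_Suc_right)
    show ?thesis unfolding b_def h1 h2 by (simp only: o_assoc)
  qed
  have bp: "b k permutes {1..m}" for k
  proof (induction k)
    case 0 then show ?case using assms(2) by (simp add: b_def)
  next
    case (Suc k) then show ?case unfolding bS by (intro permutes_compose sp sip)
  qed
  have "f (b k) = f \<alpha>"
  proof (induction k)
    case 0 then show ?case by (simp add: b_def)
  next
    case (Suc k)
    have "lin_ext m f (\<lambda>p. delta (b k) p - delta (inv ?s \<circ> b k \<circ> ?s) p) = 0"
      by (rule lin_ext_span[OF f part1[OF assms(1) bp]])
    moreover have "lin_ext m f (\<lambda>p. delta (b k) p - delta (inv ?s \<circ> b k \<circ> ?s) p) = f (b k) - f (b (Suc k))"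
      using bp[of k] bp[of "Suc k"] unfolding bS by (intro lin_ext_delta) (auto simp: perms_def)
    ultimately show ?case using Suc by simp
  qed
  then show "f ((inv ?s ^^ k) \<circ> \<alpha> \<circ> (?s ^^ k)) = f \<alpha>" by (simp add: b_def)
qed

end
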